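(* Let $(G,M,\Delta)$ be a Garside structure, $(H,N,\delta)$ a parabolic substructure, and $T$ the set of $(H,N)$-reduced elements of $G$. Let $c\in T\cap M$ and $\beta\in H$, and let $\beta=b_2^{-1}b_1$ be the left orthogonal form of $\beta$. Then $b_2\wedge_L(b_1c)=1$, and therefore $b_2^{-1}(b_1c)$ is the left orthogonal form of $\beta c$.
   Context: Let $G$ be a group and $M$ a submonoid with $M\cap M^{-1}=\{1\}$. Define $\alpha\le_L\beta$ iff $\alpha^{-1}\beta\in M$, and $\alpha\le_R\beta$ iff $\beta\alpha^{-1}\in M$. For $a\in M$ let $\mathrm{Div}_L(a)=\{b\in M: b\le_L a\}$, $\mathrm{Div}_R(a)=\{b\in M: b\le_R a\}$; $a$ is balanced if these coincide, and then $\mathrm{Div}(a)$ denotes this set. $M$ is Noetherian if each $a\in M$ admits an $n$ such that $a$ is not a product of more than $n$ non-trivial factors. A Garside structure $(G,M,\Delta)$: $\Delta\in M$ balanced, $M$ Noetherian, $\mathrm{Div}(\Delta)$ finite and generating $M$ as a monoid and $G$ as a group, $(G,\le_L)$ a lattice with meet $\wedge_L$. A parabolic substructure $(H,N,\delta)$: $\delta\in M$ balanced, $H$ (resp. $N$) the subgroup (resp. submonoid) generated by $\mathrm{Div}(\delta)$, and $\mathrm{Div}(\delta)=\mathrm{Div}(\Delta)\cap N$; it is assumed $H\ne\{1\}$. Put $\omega=\delta^{-1}\Delta$. $a\in M$ is unmovable if $\Delta\not\le_L a$; every $\alpha\in G$ has a unique right $\Delta$-form $\alpha=a\Delta^p$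 ($a\in M$ unmovable, $p\in\mathbb Z$). $a\in M$ is $N$-reduced if $a\wedge_L\delta=1$. $\alpha$ with right $\Delta$-form $a\Delta^p$ is $(H,N)$-reduced if $a$ is $N$-reduced and either $p=0$, or $p<0$ and $\omega\not\le_L a$. Every $\alpha\in G$ can be written uniquely as $\alpha=b^{-1}a$ with $a,b\in M$ and $a\wedge_L b=1$; this is its left orthogonal form. *)

theory Defs
  imports "HOL-Algebra.Algebra"
begin

definition leL :: "('a, 'b) monoid_scheme \<Rightarrow> 'a set \<Rightarrow> 'a \<Rightarrow> 'a \<Rightarrow> bool" where
  "leL G M x y \<longleftrightarrow> inv\<^bsub>G\<^esub> x \<otimes>\<^bsub>G\<^esub> y \<in> M"

definition leR :: "('a, 'b) monoid_scheme \<Rightarrow> 'a set \<Rightarrow> 'a \<Rightarrow> 'a \<Rightarrow> bool" where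
  "leR G M x y \<longleftrightarrow> y \<otimes>\<^bsub>G\<^esub> inv\<^bsub>G\<^esub> x \<in> M"

definition DivL :: "('a, 'b) monoid_scheme \<Rightarrow> 'a set \<Rightarrow> 'a \<Rightarrow> 'a set" where
  "DivL G M a = {b \<in> M. leL G M b a}"

definition DivR :: "('a, 'b) monoid_scheme \<Rightarrow> 'a set \<Rightarrow> 'a \<Rightarrow> 'a set" where
  "DivR G M a = {b \<in> M. leR G M b a}"

definition balanced :: "('a, 'b) monoid_scheme \<Rightarrow> 'a set \<Rightarrow> 'a \<Rightarrow> bool" where
  "balanced G M a \<longleftrightarrow> a \<in> M \<and> DivL G M a = DivR G M a"

text \<open>Div(a), used for balanced a.\<close>
abbreviation Div :: "('a, 'b) monoid_scheme \<Rightarrow> 'a set \<Rightarrow> 'a \<Rightarrow> 'a set" where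
  "Div G M a \<equiv> DivL G M a"

definition noetherian :: "('a, 'b) monoid_scheme \<Rightarrow> 'a set \<Rightarrow> bool" where
  "noetherian G M \<longleftrightarrow> (\<forall>a\<in>M. \<exists>n::nat. \<forall>xs.
      set xs \<subseteq> M - {\<one>\<^bsub>G\<^esub>} \<and> foldr (\<lambda>x y. x \<otimes>\<^bsub>G\<^esub> y) xs \<one>\<^bsub>G\<^esub> = a \<longrightarrow> length xs \<le> n)"

inductive_set mon_gen :: "('a, 'b) monoid_scheme \<Rightarrow> 'a set \<Rightarrow> 'a set"
  for G and S where
    one: "\<one>\<^bsub>G\<^esub> \<in> mon_gen G S"
  | incl: "s \<in> S \<Longrightarrow> s \<in> mon_gen G S"
  | mult: "x \<in> mon_gen G S \<Longrightarrow> y \<in> mon_gen G S \<Longrightarrow> x \<otimes>\<^bsub>G\<^esub> y \<in> mon_gen G S"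

definition leL_lattice :: "('a, 'b) monoid_scheme \<Rightarrow> 'a set \<Rightarrow> bool" where
  "leL_lattice G M \<longleftrightarrow> (\<forall>x\<in>carrier G. \<forall>y\<in>carrier G.
     (\<exists>m\<in>carrier G. leL G M m x \<and> leL G M m y \<and>
        (\<forall>d\<in>carrier G. leL G M d x \<and> leL G M d y \<longrightarrow> leL G M d m)) \<and>
     (\<exists>j\<in>carrier G. leL G M x j \<and> leL G M y j \<and>
        (\<forall>u\<in>carrier G. leL G M x u \<and> leL G M y u \<longrightarrow> leL G M j u)))"

definition meetL :: "('a, 'b) monoid_scheme \<Rightarrow> 'a set \<Rightarrow> 'a \<Rightarrow> 'a \<Rightarrow> 'a" where
  "meetL G M x y = (THE m. m \<in> carrier G \<and> leL G M m x \<and> leL G M m y \<and>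
        (\<forall>d\<in>carrier G. leL G M d x \<and> leL G M d y \<longrightarrow> leL G M d m))"

definition garside_structure :: "('a, 'b) monoid_scheme \<Rightarrow> 'a set \<Rightarrow> 'a \<Rightarrow> bool" where
  "garside_structure G M \<Delta> \<longleftrightarrow>
     group G \<and> submonoid M G \<and> {x \<in> M. inv\<^bsub>G\<^esub> x \<in> M} = {\<one>\<^bsub>G\<^esub>} \<and>
     balanced G M \<Delta> \<and> noetherian G M \<and> finite (Div G M \<Delta>) \<and>
     mon_gen G (Div G M \<Delta>) = M \<and> generate G (Div G M \<Delta>) = carrier G \<and>
     leL_lattice G M"

definition parabolic_substructure ::
  "('a, 'b) monoid_scheme \<Rightarrow> 'a set \<Rightarrow> 'a \<Rightarrow> 'a set \<Rightarrow> 'a set \<Rightarrow> 'a \<Rightarrow> bool" where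
  "parabolic_substructure G M \<Delta> H N \<delta> \<longleftrightarrow>
     balanced G M \<delta> \<and> H = generate G (Div G M \<delta>) \<and> N = mon_gen G (Div G M \<delta>) \<and>
     Div G M \<delta> = Div G M \<Delta> \<inter> N \<and> H \<noteq> {\<one>\<^bsub>G\<^esub>}"

definition unmovable :: "('a, 'b) monoid_scheme \<Rightarrow> 'a set \<Rightarrow> 'a \<Rightarrow> 'a \<Rightarrow> bool" where
  "unmovable G M \<Delta> a \<longleftrightarrow> a \<in> M \<and> \<not> leL G M \<Delta> a"

definition right_delta_form :: "('a, 'b) monoid_scheme \<Rightarrow> 'a set \<Rightarrow> 'a \<Rightarrow> 'a \<Rightarrow> 'a \<Rightarrow> int \<Rightarrow> bool" where
  "right_delta_form G M \<Delta> \<alpha> a p \<longleftrightarrow> unmovable G M \<Delta> a \<and> \<alpha> = a \<otimes>\<^bsub>G\<^esub> (\<Delta> [^]\<^bsub>G\<^esub> p)"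

definition N_reduced :: "('a, 'b) monoid_scheme \<Rightarrow> 'a set \<Rightarrow> 'a \<Rightarrow> 'a \<Rightarrow> bool" where
  "N_reduced G M \<delta> a \<longleftrightarrow> a \<in> M \<and> meetL G M a \<delta> = \<one>\<^bsub>G\<^esub>"

text \<open>The set T of (H,N)-reduced elements; omega = delta^{-1} Delta.\<close>
definition HN_reduced_set :: "('a, 'b) monoid_scheme \<Rightarrow> 'a set \<Rightarrow> 'a \<Rightarrow> 'a \<Rightarrow> 'a set" where
  "HN_reduced_set G M \<Delta> \<delta> = {\<alpha> \<in> carrier G. \<exists>a p. right_delta_form G M \<Delta> \<alpha> a p \<and>
      N_reduced G M \<delta> a \<and>
      (p = 0 \<or> (p < 0 \<and> \<not> leL G M (inv\<^bsub>G\<^esub> \<delta> \<otimes>\<^bsub>G\<^esub> \<Delta>) a))}"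

definition left_orth_form :: "('a, 'b) monoid_scheme \<Rightarrow> 'a set \<Rightarrow> 'a \<Rightarrow> 'a \<Rightarrow> 'a \<Rightarrow> bool" where
  "left_orth_form G M \<alpha> b a \<longleftrightarrow> a \<in> M \<and> b \<in> M \<and> \<alpha> = inv\<^bsub>G\<^esub> b \<otimes>\<^bsub>G\<^esub> a \<and>
     meetL G M a b = \<one>\<^bsub>G\<^esub>"

end

theory Submission
  imports Defs
begin


lemma (in group) cancL [simp]: "x \<in> carrier G \<Longrightarrow> y \<in> carrier G \<Longrightarrow> inv x \<otimes> (x \<otimes> y) = y"
  by (simp add: m_assoc[symmetric])
lemma (in group) cancR [simp]: "x \<in> carrier G \<Longrightarrow> y \<in> carrier G \<Longrightarrow> x \<otimes> (inv x \<otimes> y) = y"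
  by (simp add: m_assoc[symmetric])

locale GS = group G for G (structure) +
  fixes M :: "'a set" and D d :: 'a and N :: "'a set"
  assumes M_sub: "M \<subseteq> carrier G" and one_M: "\<one> \<in> M"
    and mult_M: "x \<in> M \<Longrightarrow> y \<in> M \<Longrightarrow> x \<otimes> y \<in> M"
    and pointed: "x \<in> M \<Longrightarrow> inv x \<in> M \<Longrightarrow> x = \<one>"
    and balD: "balanced G M D" and noeth: "noetherian G M"
    and genM: "mon_gen G (Div G M D) = M" and lat: "leL_lattice G M"
    and bald: "balanced G M d" and N_def: "N = mon_gen G (Div G M d)"
    and Divd: "Div G M d = Div G M D \<inter> N"
begin

abbreviation le (infix "\<preceq>" 50) where "x \<preceq> y \<equiv> leL G M x y"

lemma Mc: "x \<in> M \<Longrightarrow> x \<in> carrier G" using M_sub by auto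

lemma le_refl: "x \<in> carrier G \<Longrightarrow> x \<preceq> x" by (simp add: leL_def one_M)

lemma le_trans: assumes "x \<in> carrier G" "y \<in> carrier G" "z \<in> carrier G" "x \<preceq> y" "y \<preceq> z"
  shows "x \<preceq> z"
proof -
  have "inv x \<otimes> z = (inv x \<otimes> y) \<otimes> (inv y \<otimes> z)" using assms by (simp add: m_assoc)
  thus ?thesis using assms mult_M by (simp add: leL_def)
qed

lemma le_antisym: assumes "x \<in> carrier G" "y \<in> carrier G" "x \<preceq> y" "y \<preceq> x" shows "x = y"
proof -
  have "inv (inv x \<otimes> y) = inv y \<otimes> x" using assms by (simp add: inv_mult_group)
  hence "inv x \<otimes> y = \<one>" using assms pointed by (simp add: leL_def)
  thus ?thesis using assms by (metis cancR r_one)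
qed

lemma le_left: assumes "g \<in> carrier G" "x \<in> carrier G" "y \<in> carrier G"
  shows "(g \<otimes> x \<preceq> g \<otimes> y) = (x \<preceq> y)"
proof -
  have "inv (g \<otimes> x) \<otimes> (g \<otimes> y) = inv x \<otimes> y" using assms by (simp add: inv_mult_group m_assoc)
  thus ?thesis by (simp add: leL_def)
qed

lemma one_le: "x \<in> carrier G \<Longrightarrow> (\<one> \<preceq> x) = (x \<in> M)" by (simp add: leL_def)

lemma le_one: "x \<in> M \<Longrightarrow> x \<preceq> \<one> \<Longrightarrow> x = \<one>"
  using pointed Mc by (simp add: leL_def)

lemma le_mult: "x \<in> carrier G \<Longrightarrow> y \<in> M \<Longrightarrow> x \<preceq> x \<otimes> y"
  using Mc by (simp add: leL_def m_assoc[symmetric])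

definition ismeet where "ismeet x y m \<longleftrightarrow> m \<in> carrier G \<and> m \<preceq> x \<and> m \<preceq> y \<and>
        (\<forall>e\<in>carrier G. e \<preceq> x \<and> e \<preceq> y \<longrightarrow> e \<preceq> m)"

lemma meet_ex1: assumes "x \<in> carrier G" "y \<in> carrier G" shows "\<exists>!m. ismeet x y m"
proof -
  obtain m where "ismeet x y m" using lat assms unfolding leL_lattice_def ismeet_def by blast
  moreover have "ismeet x y m' \<Longrightarrow> ismeet x y m'' \<Longrightarrow> m' = m''" for m' m''
    unfolding ismeet_def using le_antisym by blast
  ultimately show ?thesis by blast
qed

lemma meetL_eq: "meetL G M x y = (THE m. ismeet x y m)"
  unfolding meetL_def ismeet_def by simp

lemma meet_is: assumes "x \<in> carrier G" "y \<in> carrier G" shows "ismeet x y (meetL G M x y)"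
  unfolding meetL_eq using theI'[OF meet_ex1[OF assms]] .

lemma meet_unique: assumes "x \<in> carrier G" "y \<in> carrier G" "ismeet x y m" shows "meetL G M x y = m"
  unfolding meetL_eq using the1_equality[OF meet_ex1[OF assms(1,2)] assms(3)] .

lemma meet_sym: "meetL G M x y = meetL G M y x"
  unfolding meetL_def by (rule arg_cong[where f=The]) (auto simp: fun_eq_iff)
lemma join_ex: assumes "x \<in> carrier G" "y \<in> carrier G"
  obtains j where "j \<in> carrier G" "x \<preceq> j" "y \<preceq> j" "\<And>u. u \<in> carrier G \<Longrightarrow> x \<preceq> u \<Longrightarrow> y \<preceq> u \<Longrightarrow> j \<preceq> u"
proof -
  have "\<exists>j\<in>carrier G. x \<preceq> j \<and> y \<preceq> j \<and> (\<forall>u\<in>carrier G. x \<preceq> u \<and> y \<preceq> u \<longrightarrow> j \<preceq> u)"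
    using lat[unfolded leL_lattice_def, rule_format, OF assms] by (rule conjunct2)
  thus ?thesis using that by blast
qed
lemma meet_left: assumes "g \<in> carrier G" "x \<in> carrier G" "y \<in> carrier G"
  shows "meetL G M (g \<otimes> x) (g \<otimes> y) = g \<otimes> meetL G M x y"
proof (rule meet_unique)
  have m: "ismeet x y (meetL G M x y)" using meet_is assms by auto
  hence mc: "meetL G M x y \<in> carrier G" "meetL G M x y \<preceq> x" "meetL G M x y \<preceq> y"
    unfolding ismeet_def by auto
  show "ismeet (g \<otimes> x) (g \<otimes> y) (g \<otimes> meetL G M x y)"
    unfolding ismeet_def
  proof (intro conjI ballI impI)
    fix e assume e: "e \<in> carrier G" "e \<preceq> g \<otimes> x \<and> e \<preceq> g \<otimes> y"
    have ee: "g \<otimes> (inv g \<otimes> e) = e" using e assms by simp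
    have "inv g \<otimes> e \<preceq> x" using e(2) assms e(1) le_left[of g "inv g \<otimes> e" x] ee by simp
    moreover have "inv g \<otimes> e \<preceq> y" using e(2) assms e(1) le_left[of g "inv g \<otimes> e" y] ee by simp
    ultimately have "inv g \<otimes> e \<preceq> meetL G M x y" using m e assms unfolding ismeet_def by auto
    thus "e \<preceq> g \<otimes> meetL G M x y" using le_left[of g "inv g \<otimes> e" "meetL G M x y"] assms e mc ee
      by simp
  next
    show "g \<otimes> meetL G M x y \<in> carrier G" using mc assms by simp
    show "g \<otimes> meetL G M x y \<preceq> g \<otimes> x" using mc assms le_left by simp
    show "g \<otimes> meetL G M x y \<preceq> g \<otimes> y" using mc assms le_left by simp
  qed
qed (use assms in auto)


lemma bal_c1: assumes "balanced G M g" "x \<in> Div G M g" shows "inv g \<otimes> x \<otimes> g \<in> Div G M g"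
proof -
  have gM: "g \<in> M" and eq: "DivL G M g = DivR G M g" using assms(1) by (auto simp: balanced_def)
  have xM: "x \<in> M" and tM: "inv x \<otimes> g \<in> M" using assms(2) by (auto simp: DivL_def leL_def)
  have gc: "g \<in> carrier G" and xc: "x \<in> carrier G" using gM xM Mc by auto
  have "g \<otimes> inv (inv x \<otimes> g) = x" using gc xc by (simp add: inv_mult_group)
  hence "inv x \<otimes> g \<in> DivR G M g" using tM xM by (simp add: DivR_def leR_def)
  hence "inv x \<otimes> g \<in> DivL G M g" using eq by simp
  hence rM: "inv (inv x \<otimes> g) \<otimes> g \<in> M" by (simp add: DivL_def leL_def)
  have r: "inv (inv x \<otimes> g) \<otimes> g = inv g \<otimes> x \<otimes> g" using gc xc by (simp add: inv_mult_group m_assoc)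
  have "g \<otimes> inv (inv g \<otimes> x \<otimes> g) = inv x \<otimes> g" using gc xc by (simp add: inv_mult_group m_assoc)
  hence "inv g \<otimes> x \<otimes> g \<in> DivR G M g" using rM r tM by (simp add: DivR_def leR_def)
  thus ?thesis using eq by simp
qed

lemma bal_c2: assumes "balanced G M g" "x \<in> Div G M g" shows "g \<otimes> x \<otimes> inv g \<in> Div G M g"
proof -
  have gM: "g \<in> M" and eq: "DivL G M g = DivR G M g" using assms(1) by (auto simp: balanced_def)
  have xR: "x \<in> DivR G M g" using assms(2) eq by simp
  hence xM: "x \<in> M" and tM: "g \<otimes> inv x \<in> M" by (auto simp: DivR_def leR_def)
  have gc: "g \<in> carrier G" and xc: "x \<in> carrier G" using gM xM Mc by auto
  have "inv (g \<otimes> inv x) \<otimes> g = x" using gc xc by (simp add: inv_mult_group m_assoc)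
  hence "g \<otimes> inv x \<in> DivL G M g" using tM xM by (simp add: DivL_def leL_def)
  hence "g \<otimes> inv x \<in> DivR G M g" using eq by simp
  hence rM: "g \<otimes> inv (g \<otimes> inv x) \<in> M" by (simp add: DivR_def leR_def)
  have r: "g \<otimes> inv (g \<otimes> inv x) = g \<otimes> x \<otimes> inv g" using gc xc by (simp add: inv_mult_group m_assoc)
  have "inv (g \<otimes> x \<otimes> inv g) \<otimes> g = g \<otimes> inv x" using gc xc by (simp add: inv_mult_group m_assoc)
  hence "g \<otimes> x \<otimes> inv g \<in> DivL G M g" using rM r tM by (simp add: DivL_def leL_def)
  thus ?thesis by simp
qed

lemma mg_sub: assumes S: "S \<subseteq> M" shows "mon_gen G S \<subseteq> M"
proof
  fix x assume "x \<in> mon_gen G S" thus "x \<in> M"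
    by (induction rule: mon_gen.induct) (use S in \<open>auto simp: one_M mult_M\<close>)
qed

definition cj where "cj a x = a \<otimes> x \<otimes> inv a"

lemma cj_mult: "a \<in> carrier G \<Longrightarrow> x \<in> carrier G \<Longrightarrow> y \<in> carrier G \<Longrightarrow> cj a (x \<otimes> y) = cj a x \<otimes> cj a y"
  by (simp add: cj_def m_assoc)

lemma cj_comp: "a \<in> carrier G \<Longrightarrow> b \<in> carrier G \<Longrightarrow> x \<in> carrier G \<Longrightarrow> cj (a \<otimes> b) x = cj a (cj b x)"
  by (simp add: cj_def m_assoc inv_mult_group)

lemma cj_carr: "a \<in> carrier G \<Longrightarrow> x \<in> carrier G \<Longrightarrow> cj a x \<in> carrier G"
  by (simp add: cj_def)

lemma mg_cj: assumes "S \<subseteq> M" "a \<in> carrier G" "\<And>s. s \<in> S \<Longrightarrow> cj a s \<in> mon_gen G S"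
  and "x \<in> mon_gen G S" shows "cj a x \<in> mon_gen G S"
  using assms(4)
proof (induction rule: mon_gen.induct)
  case one then show ?case using assms(2) by (simp add: cj_def mon_gen.one)
next
  case (incl s) then show ?case using assms(3) by simp
next
  case (mult x y)
  have "x \<in> M" "y \<in> M" using mult.hyps mg_sub[OF assms(1)] by auto
  then show ?case using mult.IH cj_mult[of a x y] assms(2) Mc by (simp add: mon_gen.mult)
qed

lemma DivD_M: "Div G M D \<subseteq> M" by (auto simp: DivL_def)
lemma Divd_M: "Div G M d \<subseteq> M" by (auto simp: DivL_def)
lemma N_M: "N \<subseteq> M" using mg_sub[OF Divd_M] N_def by simp
lemma DM: "D \<in> M" using balD by (simp add: balanced_def)
lemma dM: "d \<in> M" using bald by (simp add: balanced_def)
lemma Dc: "D \<in> carrier G" using DM Mc by auto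
lemma dc: "d \<in> carrier G" using dM Mc by auto
lemma d_Divd: "d \<in> Div G M d" using dM dc by (simp add: DivL_def leL_def one_M)
lemma dN: "d \<in> N" using d_Divd N_def by (simp add: mon_gen.incl)
lemma d_DivD: "d \<in> Div G M D" using d_Divd Divd by auto
lemma Nc: "x \<in> N \<Longrightarrow> x \<in> carrier G" using N_M Mc by auto
lemma N_mult: "x \<in> N \<Longrightarrow> y \<in> N \<Longrightarrow> x \<otimes> y \<in> N" using N_def by (simp add: mon_gen.mult)
lemma Divd_N: "x \<in> Div G M d \<Longrightarrow> x \<in> N" using N_def by (simp add: mon_gen.incl)
lemma one_N: "\<one> \<in> N" using N_def by (simp add: mon_gen.one)

lemma cjD_M: "x \<in> M \<Longrightarrow> cj (inv D) x \<in> M"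
proof -
  assume "x \<in> M"
  hence x: "x \<in> mon_gen G (Div G M D)" using genM by simp
  have "cj (inv D) x \<in> mon_gen G (Div G M D)"
  proof (rule mg_cj[OF DivD_M _ _ x])
    fix s assume "s \<in> Div G M D"
    hence "inv D \<otimes> s \<otimes> D \<in> Div G M D" using bal_c1[OF balD] by simp
    thus "cj (inv D) s \<in> mon_gen G (Div G M D)" using Dc by (simp add: cj_def mon_gen.incl)
  qed (use Dc in simp)
  thus ?thesis using genM by simp
qed

lemma cjd_N: "x \<in> N \<Longrightarrow> cj (inv d) x \<in> N \<and> cj d x \<in> N"
proof -
  assume "x \<in> N"
  hence x: "x \<in> mon_gen G (Div G M d)" using N_def by simp
  have "cj (inv d) x \<in> mon_gen G (Div G M d)"
  proof (rule mg_cj[OF Divd_M _ _ x])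
    fix s assume "s \<in> Div G M d"
    hence "inv d \<otimes> s \<otimes> d \<in> Div G M d" using bal_c1[OF bald] by simp
    thus "cj (inv d) s \<in> mon_gen G (Div G M d)" using dc by (simp add: cj_def mon_gen.incl)
  qed (use dc in simp)
  moreover have "cj d x \<in> mon_gen G (Div G M d)"
  proof (rule mg_cj[OF Divd_M _ _ x])
    fix s assume "s \<in> Div G M d"
    hence "d \<otimes> s \<otimes> inv d \<in> Div G M d" using bal_c2[OF bald] by simp
    thus "cj d s \<in> mon_gen G (Div G M d)" using dc by (simp add: cj_def mon_gen.incl)
  qed (use dc in simp)
  ultimately show ?thesis using N_def by simp
qed

lemma cjd_pow: "x \<in> N \<Longrightarrow> cj (inv (d [^] (k::nat))) x \<in> N \<and> cj (d [^] k) x \<in> N"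
proof (induction k arbitrary: x)
  case 0 then show ?case using Nc by (simp add: cj_def)
next
  case (Suc k)
  have a: "cj (inv (d [^] Suc k)) x = cj (inv d) (cj (inv (d [^] k)) x)"
    using dc Nc[OF Suc.prems] by (simp add: inv_mult_group cj_comp)
  have b: "cj (d [^] Suc k) x = cj (d [^] k) (cj d x)"
    using dc Nc[OF Suc.prems] by (simp add: cj_comp)
  show ?case unfolding a b using Suc cjd_N by blast
qed

lemma pow_N: "d [^] (k::nat) \<in> N"
  by (induction k) (auto simp: one_N N_mult dN)
lemma pow_DM: "D [^] (k::nat) \<in> M"
  by (induction k) (auto simp: one_M mult_M DM)


lemma powc: "d [^] (k::nat) \<in> carrier G" using pow_N Nc by auto

lemma lemK: "x \<in> N \<Longrightarrow> \<exists>k::nat. inv x \<otimes> d [^] k \<in> N"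
  unfolding N_def
proof (induction rule: mon_gen.induct)
  case one show ?case by (rule exI[of _ 0]) (simp add: one_N[unfolded N_def])
next
  case (incl s)
  hence sM: "s \<in> M" "s \<preceq> d" by (auto simp: DivL_def)
  have sc: "s \<in> carrier G" using sM Mc by auto
  have "d \<otimes> inv (inv s \<otimes> d) = s" using sc dc by (simp add: inv_mult_group)
  hence "inv s \<otimes> d \<in> DivR G M d" using sM dc sc by (simp add: DivR_def leR_def leL_def)
  hence "inv s \<otimes> d \<in> Div G M d" using bald by (simp add: balanced_def)
  hence "inv s \<otimes> d [^] (1::nat) \<in> N" using Divd_N dc by simp
  thus ?case unfolding N_def by blast
next
  case (mult a b)
  obtain ka :: nat where u: "inv a \<otimes> d [^] ka \<in> N" unfolding N_def using mult.IH(1) by blast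
  obtain kb :: nat where v: "inv b \<otimes> d [^] kb \<in> N" unfolding N_def using mult.IH(2) by blast
  have ac: "a \<in> carrier G" "b \<in> carrier G" using mult.hyps Nc N_def by auto
  have "inv (a \<otimes> b) \<otimes> d [^] (ka + kb) = (inv b \<otimes> d [^] kb) \<otimes> cj (inv (d [^] kb)) (inv a \<otimes> d [^] ka)"
    using ac dc by (simp add: cj_def m_assoc inv_mult_group nat_pow_mult[symmetric])
  moreover have "cj (inv (d [^] kb)) (inv a \<otimes> d [^] ka) \<in> N" using cjd_pow u by blast
  ultimately have "inv (a \<otimes> b) \<otimes> d [^] (ka + kb) \<in> N" using v N_mult by simp
  thus ?case unfolding N_def by blast
qed

lemma N_le_pow: "x \<in> N \<Longrightarrow> \<exists>k::nat. x \<preceq> d [^] k"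
  using lemK N_M by (auto simp: leL_def)

lemma prefix: assumes S: "S \<subseteq> M" and x: "x \<in> mon_gen G S"
  shows "x \<noteq> \<one> \<longrightarrow> (\<exists>s\<in>S. s \<noteq> \<one> \<and> s \<preceq> x)"
  using x
proof (induction rule: mon_gen.induct)
  case one then show ?case by simp
next
  case (incl s) then show ?case using S Mc le_refl by blast
next
  case (mult x y)
  have xy: "x \<in> M" "y \<in> M" using mult.hyps mg_sub[OF S] by auto
  show ?case
  proof (cases "x = \<one>")
    case True then show ?thesis using mult.IH xy Mc by simp
  next
    case False
    then obtain s where s: "s \<in> S" "s \<noteq> \<one>" "s \<preceq> x" using mult.IH by blast
    have "x \<preceq> x \<otimes> y" using le_mult xy Mc by simp
    hence "s \<preceq> x \<otimes> y" using le_trans[of s x "x \<otimes> y"] s S xy Mc mult_M by blast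
    then show ?thesis using s by blast
  qed
qed

lemma lemE: "s \<in> Div G M D \<Longrightarrow> s \<preceq> d [^] (k::nat) \<Longrightarrow> s \<preceq> d"
proof (induction k arbitrary: s)
  case 0
  hence "s = \<one>" using le_one by (simp add: DivL_def)
  then show ?case using dM dc by (simp add: leL_def)
next
  case (Suc k)
  have sM: "s \<in> M" and sD: "s \<preceq> D" using Suc.prems by (auto simp: DivL_def)
  have sc: "s \<in> carrier G" using sM Mc by auto
  have dD: "d \<preceq> D" using d_DivD by (simp add: DivL_def)
  obtain j where jc: "j \<in> carrier G" and sj: "s \<preceq> j" and dj: "d \<preceq> j"
    and jl: "\<And>u. u \<in> carrier G \<Longrightarrow> s \<preceq> u \<Longrightarrow> d \<preceq> u \<Longrightarrow> j \<preceq> u"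
    using join_ex[OF sc dc] by blast
  have dk: "d [^] Suc k = d \<otimes> d [^] k" using dc nat_pow_Suc2 by blast
  have "d \<preceq> d \<otimes> d [^] k" using le_mult dc pow_N N_M by auto
  hence j1: "j \<preceq> d \<otimes> d [^] k" using jl Suc.prems(2) dk dc powc by simp
  have "inv D \<otimes> d \<otimes> D \<in> M" using bal_c1[OF balD d_DivD] by (auto simp: DivL_def)
  hence "D \<preceq> d \<otimes> D" using Dc dc by (simp add: leL_def m_assoc)
  hence "s \<preceq> d \<otimes> D" using le_trans[OF sc Dc _ sD] Dc dc by simp
  moreover have "d \<preceq> d \<otimes> D" using le_mult dc DM by simp
  ultimately have j2: "j \<preceq> d \<otimes> D" using jl dc Dc by simp
  have j3: "j \<preceq> D" using jl Dc sD dD by simp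
  define t where "t = inv d \<otimes> j"
  have tc: "t \<in> carrier G" using t_def jc dc by simp
  have jt: "j = d \<otimes> t" using t_def jc dc by simp
  have tM: "t \<in> M" using dj by (simp add: leL_def t_def)
  have t1: "t \<preceq> d [^] k" using j1 jt le_left dc tc powc by simp
  have t2: "t \<preceq> D" using j2 jt le_left dc tc Dc by simp
  have "t \<in> Div G M D" using tM t2 by (simp add: DivL_def)
  hence "t \<preceq> d" using Suc.IH t1 by simp
  hence "t \<in> Div G M d" using tM by (simp add: DivL_def)
  hence "j \<in> N" using jt Divd_N dN N_mult by simp
  moreover have "j \<in> M" using jt tM dM mult_M by simp
  ultimately have "j \<in> Div G M d" using Divd j3 by (simp add: DivL_def)
  hence "j \<preceq> d" by (simp add: DivL_def)
  thus ?case using le_trans[OF sc jc dc sj] by simp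
qed


abbreviation fl where "fl xs \<equiv> foldr (\<lambda>x y. x \<otimes> y) xs \<one>"

lemma lemD_aux: "\<forall>e. e \<in> M \<longrightarrow> (\<forall>xs. set xs \<subseteq> M - {\<one>} \<and> fl xs = e \<longrightarrow> length xs \<le> n)
   \<longrightarrow> (\<forall>k::nat. e \<preceq> d [^] k \<longrightarrow> e \<in> N)"
proof (induction n)
  case 0
  show ?case
  proof (intro allI impI)
    fix e k assume eM: "e \<in> M" and b: "\<forall>xs. set xs \<subseteq> M - {\<one>} \<and> fl xs = e \<longrightarrow> length xs \<le> 0"
    show "e \<in> N"
    proof (cases "e = \<one>")
      case True then show ?thesis using one_N by simp
    next
      case False
      have "fl [e] = e" using eM Mc by simp
      then show ?thesis using b[rule_format, of "[e]"] eM False by simp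
    qed
  qed
next
  case (Suc n)
  show ?case
  proof (intro allI impI)
    fix e k assume eM: "e \<in> M" and b: "\<forall>xs. set xs \<subseteq> M - {\<one>} \<and> fl xs = e \<longrightarrow> length xs \<le> Suc n"
      and ek: "e \<preceq> d [^] (k::nat)"
    have ec: "e \<in> carrier G" using eM Mc by auto
    show "e \<in> N"
    proof (cases "e = \<one>")
      case True then show ?thesis using one_N by simp
    next
      case False
      then obtain s where sD: "s \<in> Div G M D" and s1: "s \<noteq> \<one>" and se: "s \<preceq> e"
        using prefix[OF DivD_M, of e] genM eM by auto
      have sM: "s \<in> M" using sD by (simp add: DivL_def)
      have sc: "s \<in> carrier G" using sM Mc by auto
      have "s \<preceq> d [^] k" using le_trans[OF sc ec powc se ek] .
      hence "s \<preceq> d" using lemE sD by blast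
      hence sN: "s \<in> N" using sM Divd_N by (simp add: DivL_def)
      define f where "f = inv s \<otimes> e"
      have fM: "f \<in> M" using se by (simp add: leL_def f_def)
      have fc: "f \<in> carrier G" using fM Mc by auto
      have ef: "e = s \<otimes> f" using f_def sc ec by simp
      have isc: "inv s \<otimes> d [^] k \<in> carrier G" using sc powc by simp
      have "s \<otimes> (inv s \<otimes> d [^] k) = d [^] k" using sc powc by simp
      hence f1: "f \<preceq> inv s \<otimes> d [^] k" using le_left[OF sc fc isc] ek ef by simp
      have "inv (inv s \<otimes> d [^] k) \<otimes> d [^] k = cj (inv (d [^] k)) s"
        using sc powc by (simp add: cj_def inv_mult_group m_assoc)
      hence "inv s \<otimes> d [^] k \<preceq> d [^] k" using cjd_pow[OF sN] N_M by (auto simp: leL_def)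
      hence fk: "f \<preceq> d [^] k" using le_trans[OF fc isc powc f1] by simp
      have "\<forall>xs. set xs \<subseteq> M - {\<one>} \<and> fl xs = f \<longrightarrow> length xs \<le> n"
      proof (intro allI impI)
        fix xs assume xs: "set xs \<subseteq> M - {\<one>} \<and> fl xs = f"
        hence "set (s # xs) \<subseteq> M - {\<one>} \<and> fl (s # xs) = e" using sM s1 ef by simp
        thus "length xs \<le> n" using b by fastforce
      qed
      hence "f \<in> N" using Suc.IH fM fk by blast
      thus ?thesis using ef sN N_mult by simp
    qed
  qed
qed

lemma lemD: assumes "e \<in> M" "e \<preceq> d [^] (k::nat)" shows "e \<in> N"
proof -
  obtain n where "\<forall>xs. set xs \<subseteq> M - {\<one>} \<and> fl xs = e \<longrightarrow> length xs \<le> n"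
    using noeth assms(1) unfolding noetherian_def by blast
  thus ?thesis using lemD_aux[of n] assms by blast
qed

lemma lemQ: assumes "g \<in> N" "w \<in> M" "g \<otimes> w \<in> N" shows "w \<in> N"
proof -
  have gc: "g \<in> carrier G" and wc: "w \<in> carrier G" using assms Nc Mc by auto
  obtain k :: nat where k: "g \<otimes> w \<preceq> d [^] k" using N_le_pow assms(3) by blast
  have isc: "inv g \<otimes> d [^] k \<in> carrier G" using gc powc by simp
  have "g \<otimes> (inv g \<otimes> d [^] k) = d [^] k" using gc powc by simp
  hence f1: "w \<preceq> inv g \<otimes> d [^] k" using le_left[OF gc wc isc] k by simp
  have "inv (inv g \<otimes> d [^] k) \<otimes> d [^] k = cj (inv (d [^] k)) g"
    using gc powc by (simp add: cj_def inv_mult_group m_assoc)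
  hence "inv g \<otimes> d [^] k \<preceq> d [^] k" using cjd_pow[OF assms(1)] N_M by (auto simp: leL_def)
  hence "w \<preceq> d [^] k" using le_trans[OF wc isc powc f1] by simp
  thus ?thesis using lemD assms(2) by blast
qed


lemma Hform: "\<beta> \<in> generate G (Div G M d) \<Longrightarrow> \<exists>x\<in>N. \<exists>y\<in>N. \<beta> = inv x \<otimes> y"
proof (induction rule: generate.induct)
  case one then show ?case using one_N by (intro bexI[of _ \<one>]) auto
next
  case (incl h)
  have "h = inv \<one> \<otimes> h" using Nc Divd_N incl by simp
  thus ?case using one_N Divd_N incl by blast
next
  case (inv h)
  have "inv h = inv h \<otimes> \<one>" using Nc Divd_N inv by simp
  thus ?case using one_N Divd_N inv by blast
next
  case (eng h1 h2)
  obtain x1 y1 where 1: "x1 \<in> N" "y1 \<in> N" "h1 = inv x1 \<otimes> y1" using eng.IH(1) by blast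
  obtain x2 y2 where 2: "x2 \<in> N" "y2 \<in> N" "h2 = inv x2 \<otimes> y2" using eng.IH(2) by blast
  obtain k :: nat where u: "inv x2 \<otimes> d [^] k \<in> N" using lemK 2 by blast
  have c: "x1 \<in> carrier G" "y1 \<in> carrier G" "x2 \<in> carrier G" "y2 \<in> carrier G" using 1 2 Nc by auto
  have "h1 \<otimes> h2 = inv (d [^] k \<otimes> x1) \<otimes> (cj (d [^] k) (y1 \<otimes> (inv x2 \<otimes> d [^] k)) \<otimes> y2)"
    using 1 2 c powc by (simp add: cj_def m_assoc inv_mult_group)
  moreover have "d [^] k \<otimes> x1 \<in> N" using pow_N 1 N_mult by simp
  moreover have "cj (d [^] k) (y1 \<otimes> (inv x2 \<otimes> d [^] k)) \<otimes> y2 \<in> N"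
    using cjd_pow N_mult 1 2 u by simp
  ultimately show ?case by blast
qed

lemma mainL: assumes cM: "c \<in> M" and cd: "meetL G M c d = \<one>"
  and bH: "\<beta> \<in> generate G (Div G M d)" and b1: "b1 \<in> M" and b2: "b2 \<in> M"
  and bb: "\<beta> = inv b2 \<otimes> b1" and m12: "meetL G M b1 b2 = \<one>"
  shows "meetL G M b2 (b1 \<otimes> c) = \<one>"
proof -
  have cc: "c \<in> carrier G" "b1 \<in> carrier G" "b2 \<in> carrier G" using cM b1 b2 Mc by auto
  obtain x y where xy: "x \<in> N" "y \<in> N" "\<beta> = inv x \<otimes> y" using Hform bH by blast
  have xyc: "x \<in> carrier G" "y \<in> carrier G" using xy Nc by auto
  define g where "g = x \<otimes> inv b2"
  have gc: "g \<in> carrier G" using g_def xyc cc by simp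
  have gx: "g \<otimes> b2 = x" using g_def xyc cc by (simp add: m_assoc)
  have "g \<otimes> b1 = x \<otimes> \<beta>" using g_def xyc cc bb by (simp add: m_assoc)
  hence gy: "g \<otimes> b1 = y" using xy xyc by simp
  have "meetL G M x y = g \<otimes> meetL G M b2 b1" using meet_left[OF gc cc(3) cc(2)] gx gy by simp
  hence mg: "meetL G M x y = g" using m12 meet_sym[of b1 b2] gc by simp
  have "ismeet x y g" using meet_is[OF xyc] mg by simp
  moreover have "\<one> \<preceq> x" "\<one> \<preceq> y" using xy N_M one_le xyc by auto
  ultimately have "\<one> \<preceq> g" unfolding ismeet_def by auto
  hence gM: "g \<in> M" using one_le gc by simp
  obtain k :: nat where "x \<preceq> d [^] k" using N_le_pow xy by blast
  moreover have "g \<preceq> x" using \<open>ismeet x y g\<close> unfolding ismeet_def by auto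
  ultimately have "g \<preceq> d [^] k" using le_trans gc xyc powc by blast
  hence gN: "g \<in> N" using lemD gM by blast
  have b2N: "b2 \<in> N" using lemQ[OF gN b2] gx xy by simp
  have b1N: "b1 \<in> N" using lemQ[OF gN b1] gy xy by simp
  define m where "m = meetL G M b2 (b1 \<otimes> c)"
  have b1cc: "b1 \<otimes> c \<in> carrier G" using cc by simp
  have mm: "ismeet b2 (b1 \<otimes> c) m" using meet_is[OF cc(3) b1cc] m_def by simp
  hence mc: "m \<in> carrier G" and m2: "m \<preceq> b2" and m1c: "m \<preceq> b1 \<otimes> c" unfolding ismeet_def by auto
  have "\<one> \<preceq> b2" "\<one> \<preceq> b1 \<otimes> c" using b2 b1 cM mult_M one_le cc by auto
  hence "\<one> \<preceq> m" using mm unfolding ismeet_def by auto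
  hence mM: "m \<in> M" using one_le mc by simp
  obtain k2 :: nat where "b2 \<preceq> d [^] k2" using N_le_pow b2N by blast
  hence "m \<preceq> d [^] k2" using le_trans[OF mc cc(3) powc m2] by simp
  hence mN: "m \<in> N" using lemD mM by blast
  show ?thesis unfolding m_def[symmetric]
  proof (rule ccontr)
    assume "m \<noteq> \<one>"
    then obtain s where sD: "s \<in> Div G M d" and s1: "s \<noteq> \<one>" and sm: "s \<preceq> m"
      using prefix[OF Divd_M, of m] mN N_def by auto
    have sM: "s \<in> M" and sd: "s \<preceq> d" using sD by (auto simp: DivL_def)
    have sc: "s \<in> carrier G" using sM Mc by auto
    have sb: "s \<preceq> b1 \<otimes> c" using le_trans[OF sc mc b1cc sm m1c] .
    have s2: "s \<preceq> b2" using le_trans[OF sc mc cc(3) sm m2] .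
    have "cj (inv d) b1 \<in> M" using cjd_N b1N N_M by blast
    hence "d \<preceq> b1 \<otimes> d" using dc cc by (simp add: cj_def leL_def m_assoc)
    hence sbd: "s \<preceq> b1 \<otimes> d" using le_trans[OF sc dc _ sd] dc cc by simp
    obtain j where jc: "j \<in> carrier G" and bj: "b1 \<preceq> j" and sj: "s \<preceq> j"
      and jl: "\<And>u. u \<in> carrier G \<Longrightarrow> b1 \<preceq> u \<Longrightarrow> s \<preceq> u \<Longrightarrow> j \<preceq> u"
      using join_ex[OF cc(2) sc] by blast
    have j1: "j \<preceq> b1 \<otimes> c" using jl b1cc sb le_mult cc cM by simp
    have j2: "j \<preceq> b1 \<otimes> d" using jl sbd le_mult cc dM dc by simp
    define e where "e = inv b1 \<otimes> j"
    have ec: "e \<in> carrier G" using e_def jc cc by simp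
    have je: "j = b1 \<otimes> e" using e_def jc cc by simp
    have eM: "e \<in> M" using bj by (simp add: leL_def e_def)
    have "e \<preceq> c" using j1 je le_left cc ec by simp
    moreover have "e \<preceq> d" using j2 je le_left cc ec dc by simp
    ultimately have "e \<preceq> meetL G M c d" using meet_is[OF cc(1) dc] ec unfolding ismeet_def by blast
    hence "e = \<one>" using cd le_one eM by simp
    hence "j = b1" using je cc by simp
    hence "s \<preceq> b1" using sj by simp
    hence "s \<preceq> meetL G M b1 b2" using meet_is[OF cc(2) cc(3)] s2 sc unfolding ismeet_def by blast
    hence "s = \<one>" using m12 le_one sM by simp
    thus False using s1 by simp
  qed
qed

end

theorem lemma3p8:
  fixes G :: "('a, 'b) monoid_scheme" and M H N :: "'a set" and \<Delta> \<delta> c \<beta> b1 b2 :: 'a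
  assumes "garside_structure G M \<Delta>"
    and "parabolic_substructure G M \<Delta> H N \<delta>"
    and "c \<in> HN_reduced_set G M \<Delta> \<delta> \<inter> M"
    and "\<beta> \<in> H"
    and "left_orth_form G M \<beta> b2 b1"
  shows "meetL G M b2 (b1 \<otimes>\<^bsub>G\<^esub> c) = \<one>\<^bsub>G\<^esub> \<and>
         left_orth_form G M (\<beta> \<otimes>\<^bsub>G\<^esub> c) b2 (b1 \<otimes>\<^bsub>G\<^esub> c)"
proof -
  note GA = assms(1)[unfolded garside_structure_def]
  have grp: "group G" using GA by (rule conjunct1)
  have sm: "submonoid M G" using GA by (elim conjE)
  have pt: "{x \<in> M. inv\<^bsub>G\<^esub> x \<in> M} = {\<one>\<^bsub>G\<^esub>}" using GA by (elim conjE)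
  have bD: "balanced G M \<Delta>" using GA by (elim conjE)
  have no: "noetherian G M" using GA by (elim conjE)
  have gm: "mon_gen G (Div G M \<Delta>) = M" using GA by (elim conjE)
  have la: "leL_lattice G M" using GA by (elim conjE)
  note PA = assms(2)[unfolded parabolic_substructure_def]
  have bd: "balanced G M \<delta>" using PA by (elim conjE)
  have Hd: "H = generate G (Div G M \<delta>)" using PA by (elim conjE)
  have Nd: "N = mon_gen G (Div G M \<delta>)" using PA by (elim conjE)
  have Dd: "Div G M \<delta> = Div G M \<Delta> \<inter> N" using PA by (elim conjE)
  interpret GS G M \<Delta> \<delta> N
  proof (intro GS.intro GS_axioms.intro grp)
    show "M \<subseteq> carrier G" using sm by (rule submonoid.subset)
    show "\<one>\<^bsub>G\<^esub> \<in> M" using sm by (rule submonoid.one_closed)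
    show "\<And>x y. x \<in> M \<Longrightarrow> y \<in> M \<Longrightarrow> x \<otimes>\<^bsub>G\<^esub> y \<in> M" using sm by (rule submonoid.m_closed)
    show "\<And>x. x \<in> M \<Longrightarrow> inv\<^bsub>G\<^esub> x \<in> M \<Longrightarrow> x = \<one>\<^bsub>G\<^esub>" using pt by blast
  qed (fact grp bD no gm la bd Nd Dd)+
  have cM: "c \<in> M" and cT: "c \<in> HN_reduced_set G M \<Delta> \<delta>" using assms(3) by auto
  then obtain a p where rdf: "right_delta_form G M \<Delta> c a p" and Na: "N_reduced G M \<delta> a"
    and pc: "p = 0 \<or> (p < 0 \<and> \<not> leL G M (inv\<^bsub>G\<^esub> \<delta> \<otimes>\<^bsub>G\<^esub> \<Delta>) a)"
    unfolding HN_reduced_set_def by blast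
  have aM: "a \<in> M" and aD: "\<not> leL G M \<Delta> a" and ca: "c = a \<otimes>\<^bsub>G\<^esub> \<Delta> [^]\<^bsub>G\<^esub> p"
    using rdf unfolding right_delta_form_def unmovable_def by auto
  have ac: "a \<in> carrier G" and cc: "c \<in> carrier G" using aM cM Mc by auto
  have p0: "p = 0"
  proof (rule ccontr)
    assume "p \<noteq> 0"
    hence pn: "p < 0" using pc by simp
    obtain m where nm: "nat (- p) = Suc m" using pn by (metis gr0_implies_Suc nat_0_less_mult_iff zero_less_nat_eq neg_0_less_iff_less mult_1)
    have "c = a \<otimes>\<^bsub>G\<^esub> inv\<^bsub>G\<^esub> (\<Delta> [^]\<^bsub>G\<^esub> Suc m)" using ca pn nm by (simp add: int_pow_def2)
    hence "a = c \<otimes>\<^bsub>G\<^esub> \<Delta> [^]\<^bsub>G\<^esub> Suc m" using ac Dc by (simp add: m_assoc)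
    also have "\<dots> = c \<otimes>\<^bsub>G\<^esub> (\<Delta> \<otimes>\<^bsub>G\<^esub> \<Delta> [^]\<^bsub>G\<^esub> m)" using Dc nat_pow_Suc2 by simp
    finally have "inv\<^bsub>G\<^esub> \<Delta> \<otimes>\<^bsub>G\<^esub> a = cj (inv\<^bsub>G\<^esub> \<Delta>) c \<otimes>\<^bsub>G\<^esub> \<Delta> [^]\<^bsub>G\<^esub> m" using Dc cc by (simp add: cj_def m_assoc)
    hence "inv\<^bsub>G\<^esub> \<Delta> \<otimes>\<^bsub>G\<^esub> a \<in> M" using cjD_M[OF cM] pow_DM mult_M by simp
    thus False using aD by (simp add: leL_def)
  qed
  hence "c = a" using ca ac by simp
  hence cd: "meetL G M c \<delta> = \<one>\<^bsub>G\<^esub>" using Na unfolding N_reduced_def by simp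
  have b1: "b1 \<in> M" and b2: "b2 \<in> M" and bb: "\<beta> = inv\<^bsub>G\<^esub> b2 \<otimes>\<^bsub>G\<^esub> b1" and m12: "meetL G M b1 b2 = \<one>\<^bsub>G\<^esub>"
    using assms(5) unfolding left_orth_form_def by auto
  have m: "meetL G M b2 (b1 \<otimes>\<^bsub>G\<^esub> c) = \<one>\<^bsub>G\<^esub>"
    using mainL[OF cM cd _ b1 b2 bb m12] assms(4) Hd by simp
  moreover have "left_orth_form G M (\<beta> \<otimes>\<^bsub>G\<^esub> c) b2 (b1 \<otimes>\<^bsub>G\<^esub> c)"
    unfolding left_orth_form_def using m meet_sym b1 b2 cM mult_M bb Mc by (simp add: m_assoc)
  ultimately show ?thesis by simp
qed

end
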